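(* Let $n\ge2$ and $1\le j\le n$, $r>0$. Then $$\sup_{S\in W_r^1}|\theta_{j,n}-\theta_j|\le2\pi\sqrt r\,j/n,$$ where $\theta_{j,n}=\frac1n\sum_{l=1}^nS(l/n)\phi_j(l/n)$ and $\theta_j=\int_0^1S(t)\phi_j(t)dt$.
   Context: $\phi_1\equiv1$, $\phi_j(x)=\sqrt2\,\mathrm{Tr}_j(2\pi[j/2]x)$ for $j\ge2$, where $\mathrm{Tr}_j=\cos$ for even $j$, $\sin$ for odd $j$, $[\cdot]$ integer part. $W_r^1$: set of 1-periodic continuously differentiable $f:\mathbb R\to\mathbb R$ with $\|f\|^2+\|f'\|^2\le r$, $\|f\|^2=\int_0^1f^2$. *)

theory Defs
  imports "HOL-Analysis.Analysis"
begin

definition phi :: "nat \<Rightarrow> real \<Rightarrow> real" where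
  "phi j x = (if j = 1 then 1
              else sqrt 2 * (if even j then cos (2 * pi * real (j div 2) * x)
                                       else sin (2 * pi * real (j div 2) * x)))"

definition W1 :: "real \<Rightarrow> (real \<Rightarrow> real) set" where
  "W1 r = {f. (\<forall>x. f (x + 1) = f x)
             \<and> (\<forall>x. f differentiable at x)
             \<and> continuous_on UNIV (deriv f)
             \<and> integral {0..1} (\<lambda>t. (f t)\<^sup>2) + integral {0..1} (\<lambda>t. (deriv f t)\<^sup>2) \<le> r}"

definition theta_n :: "(real \<Rightarrow> real) \<Rightarrow> nat \<Rightarrow> nat \<Rightarrow> real" where
  "theta_n S j n = (1 / real n) * (\<Sum>l = 1..n. S (real l / real n) * phi j (real l / real n))"

definition theta :: "(real \<Rightarrow> real) \<Rightarrow> nat \<Rightarrow> real" where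
  "theta S j = integral {0..1} (\<lambda>t. S t * phi j t)"

end

theory Submission imports Defs begin

lemma interval_bound:
  fixes g g' :: "real \<Rightarrow> real" and a b :: real
  assumes ab: "a \<le> b"
    and der: "\<And>x. (g has_real_derivative g' x) (at x)"
    and cg': "continuous_on UNIV g'"
  shows "\<bar>(b - a) * g b - integral {a..b} g\<bar> \<le> (b - a) * integral {a..b} (\<lambda>t. \<bar>g' t\<bar>)"
proof -
  have cg: "continuous_on UNIV g"
    by (metis DERIV_isCont continuous_at_imp_continuous_on der)
  have ig: "g integrable_on {a..b}"
    by (meson cg continuous_on_subset integrable_continuous_interval subset_UNIV)
  have iabs: "\<And>c d. (\<lambda>t. \<bar>g' t\<bar>) integrable_on {c..d}"
    by (intro integrable_continuous_interval continuous_on_subset[OF continuous_on_rabs[OF cg']]) auto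
  have ig': "\<And>c d. g' integrable_on {c..d}"
    by (meson cg' continuous_on_subset integrable_continuous_interval subset_UNIV)
  define C where "C = integral {a..b} (\<lambda>t. \<bar>g' t\<bar>)"
  have pt: "\<bar>g b - g t\<bar> \<le> C" if t: "t \<in> {a..b}" for t
  proof -
    have "(g' has_integral (g b - g t)) {t..b}"
      by (rule fundamental_theorem_of_calculus) (use t der in \<open>auto simp: has_real_derivative_iff_has_vector_derivative[symmetric] intro: has_field_derivative_at_within\<close>)
    hence e: "integral {t..b} g' = g b - g t" by (simp add: integral_unique)
    have "\<bar>integral {t..b} g'\<bar> \<le> integral {t..b} (\<lambda>t. \<bar>g' t\<bar>)"
      using integral_norm_bound_integral[OF ig'[of t b] iabs[of t b]] by simp
    also have "\<dots> \<le> C" unfolding C_def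
      by (rule integral_subset_le) (use t iabs in auto)
    finally show ?thesis using e by simp
  qed
  have "(b - a) * g b - integral {a..b} g = integral {a..b} (\<lambda>t. g b - g t)"
    using ab ig by (subst integral_diff) auto
  moreover have "\<bar>integral {a..b} (\<lambda>t. g b - g t)\<bar> \<le> integral {a..b} (\<lambda>t. C)"
  proof -
    have i1: "(\<lambda>t. g b - g t) integrable_on {a..b}" by (rule integrable_diff[OF _ ig]) (rule Henstock_Kurzweil_Integration.integrable_const_ivl)
    have i2: "(\<lambda>t. C) integrable_on {a..b}" by (rule Henstock_Kurzweil_Integration.integrable_const_ivl)
    show ?thesis using integral_norm_bound_integral[OF i1 i2] pt by simp
  qed
  ultimately show ?thesis using ab by (simp add: C_def)
qed

lemma sum_integrals:
  fixes h :: "real \<Rightarrow> real" and n :: nat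
  assumes "continuous_on UNIV h" "n > 0"
  shows "(\<Sum>l=1..m. integral {(real l - 1)/n .. real l / n} h) = integral {0 .. real m / n} h"
proof (induction m)
  case 0 then show ?case by simp
next
  case (Suc m)
  have i: "h integrable_on {0..real (Suc m)/n}"
    by (meson assms(1) continuous_on_subset integrable_continuous_interval subset_UNIV)
  have "integral {0 .. real (Suc m) / n} h = integral {0 .. real m / n} h + integral {real m / n .. real (Suc m)/n} h"
    by (rule Henstock_Kurzweil_Integration.integral_combine[symmetric]) (use assms i in \<open>auto simp: divide_right_mono frac_le\<close>)
  then show ?case using Suc by simp
qed

lemma riemann_err:
  fixes g g' :: "real \<Rightarrow> real" and n :: nat
  assumes der: "\<And>x. (g has_real_derivative g' x) (at x)"
    and cg': "continuous_on UNIV g'" and n: "n > 0"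
  shows "\<bar>(1 / real n) * (\<Sum>l=1..n. g (real l / real n)) - integral {0..1} g\<bar>
         \<le> (1 / real n) * integral {0..1} (\<lambda>t. \<bar>g' t\<bar>)"
proof -
  have cg: "continuous_on UNIV g"
    by (metis DERIV_isCont continuous_at_imp_continuous_on der)
  have nn: "real n / real n = 1" using n by simp
  have e1: "integral {0..1} g = (\<Sum>l=1..n. integral {(real l - 1)/n .. real l / n} g)"
    using sum_integrals[OF cg n, of n] unfolding nn by (rule sym)
  have e2: "integral {0..1} (\<lambda>t. \<bar>g' t\<bar>) = (\<Sum>l=1..n. integral {(real l - 1)/n .. real l / n} (\<lambda>t. \<bar>g' t\<bar>))"
    using sum_integrals[OF continuous_on_rabs[OF cg'] n, of n] unfolding nn by (rule sym)
  have step: "\<bar>(1 / real n) * g (real l / real n) - integral {(real l - 1)/n .. real l / n} g\<bar>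
      \<le> (1 / real n) * integral {(real l - 1)/n .. real l / n} (\<lambda>t. \<bar>g' t\<bar>)" for l
  proof -
    have ab: "(real l - 1)/n \<le> real l / n" using n by (simp add: divide_right_mono)
    have bma: "real l / n - (real l - 1)/n = 1 / real n" using n by (simp add: field_simps)
    show ?thesis using interval_bound[OF ab der cg'] unfolding bma .
  qed
  define X where "X = (\<lambda>l::nat. (1 / real n) * g (real l / real n) - integral {(real l - 1)/n .. real l / n} g)"
  define Y where "Y = (\<lambda>l::nat. (1 / real n) * integral {(real l - 1)/n .. real l / n} (\<lambda>t. \<bar>g' t\<bar>))"
  have E1: "(1 / real n) * (\<Sum>l=1..n. g (real l / real n)) - integral {0..1} g = sum X {1..n}"
    unfolding e1 X_def by (simp only: sum_distrib_left sum_subtractf)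
  have E2: "sum Y {1..n} = (1 / real n) * integral {0..1} (\<lambda>t. \<bar>g' t\<bar>)"
    unfolding e2 Y_def by (simp only: sum_distrib_left)
  have L1: "\<bar>sum X {1..n}\<bar> \<le> sum (\<lambda>l. \<bar>X l\<bar>) {1..n}" by (rule sum_abs)
  have L2: "sum (\<lambda>l. \<bar>X l\<bar>) {1..n} \<le> sum Y {1..n}"
    by (rule sum_mono) (unfold X_def Y_def, rule step)
  show ?thesis unfolding E1 E2[symmetric] using L1 L2 by (rule order_trans)
qed

lemma cauchy_l1:
  fixes f :: "real \<Rightarrow> real"
  assumes cf: "continuous_on UNIV f"
  shows "integral {0..1} (\<lambda>t. \<bar>f t\<bar>) \<le> sqrt (integral {0..1} (\<lambda>t. (f t)\<^sup>2))"
proof -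
  define c where "c = integral {0..1} (\<lambda>t. \<bar>f t\<bar>)"
  define A where "A = integral {0..1} (\<lambda>t. (f t)\<^sup>2)"
  have i1: "(\<lambda>t. \<bar>f t\<bar>) integrable_on {0..1}"
    by (intro integrable_continuous_interval continuous_on_subset[OF continuous_on_rabs[OF cf]]) auto
  have i2: "(\<lambda>t. (f t)\<^sup>2) integrable_on {0..1}"
    by (intro integrable_continuous_interval continuous_on_subset[OF continuous_on_power[OF cf]]) auto
  have c0: "c \<ge> 0" unfolding c_def by (rule integral_nonneg[OF i1]) simp
  have i3: "(\<lambda>t. (2 * c) * \<bar>f t\<bar>) integrable_on {0..1}"
    using integrable_on_cmult_left[OF i1, of "2*c"] by simp
  have i4: "(\<lambda>t. (f t)\<^sup>2 - (2 * c) * \<bar>f t\<bar>) integrable_on {0..1}"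
    by (rule integrable_diff[OF i2 i3])
  have e3: "integral {0..1} (\<lambda>t. (2 * c) * \<bar>f t\<bar>) = 2 * c * c"
    unfolding c_def by (rule integral_mult_right)
  have e4: "integral {0..1} (\<lambda>t. (f t)\<^sup>2 - (2 * c) * \<bar>f t\<bar>) = A - 2 * c * c"
    using integral_diff[OF i2 i3] e3 A_def by simp
  have e5: "integral {0..1} (\<lambda>t. ((f t)\<^sup>2 - (2 * c) * \<bar>f t\<bar>) + c\<^sup>2) = A - 2 * c * c + c\<^sup>2"
    using integral_add[OF i4 Henstock_Kurzweil_Integration.integrable_const_ivl[of "c\<^sup>2" 0 1]] e4 by simp
  have pw: "\<And>t. (\<bar>f t\<bar> - c)\<^sup>2 = ((f t)\<^sup>2 - (2 * c) * \<bar>f t\<bar>) + c\<^sup>2"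
    by (simp add: power2_eq_square algebra_simps)
  have "0 \<le> integral {0..1} (\<lambda>t. ((f t)\<^sup>2 - (2 * c) * \<bar>f t\<bar>) + c\<^sup>2)"
  proof (rule integral_nonneg)
    show "(\<lambda>t. ((f t)\<^sup>2 - (2 * c) * \<bar>f t\<bar>) + c\<^sup>2) integrable_on {0..1}"
      by (rule integrable_add[OF i4 Henstock_Kurzweil_Integration.integrable_const_ivl])
    show "\<And>x. x \<in> {0..1} \<Longrightarrow> 0 \<le> (f x)\<^sup>2 - 2 * c * \<bar>f x\<bar> + c\<^sup>2"
      by (metis pw zero_le_power2)
  qed
  then have "c\<^sup>2 \<le> A" using e5 by (simp add: power2_eq_square)
  then show ?thesis unfolding c_def[symmetric] A_def[symmetric] using c0 real_le_rsqrt by blast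
qed


definition phi' :: "nat \<Rightarrow> real \<Rightarrow> real" where
  "phi' j x = (if j = 1 then 0
              else sqrt 2 * (if even j then - (2 * pi * real (j div 2)) * sin (2 * pi * real (j div 2) * x)
                                       else (2 * pi * real (j div 2)) * cos (2 * pi * real (j div 2) * x)))"

lemma phi_deriv: "(phi j has_real_derivative phi' j x) (at x)"
  unfolding phi_def phi'_def
  by (cases "j = 1"; cases "even j") (auto intro!: derivative_eq_intros)

lemma phi'_cont: "continuous_on UNIV (phi' j)"
  unfolding phi'_def
  by (cases "j = 1"; cases "even j") (auto intro!: continuous_intros)

lemma phi_bound: "\<bar>phi j x\<bar> \<le> sqrt 2"
  unfolding phi_def by (auto simp: abs_mult)

lemma phi'_bound: "\<bar>phi' j x\<bar> \<le> sqrt 2 * (2 * pi * real (j div 2))"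
  unfolding phi'_def by (auto simp: abs_mult intro!: mult_left_le)

lemma final_arith:
  fixes j :: nat assumes "1 \<le> j"
  shows "sqrt 2 * (1 + 2 * pi * real (j div 2)) \<le> 2 * pi * real j"
proof -
  have k: "2 * real (j div 2) \<le> real j" by linarith
  have s2: "sqrt 2 < (283/200)" by (rule real_less_lsqrt) (auto simp: power2_eq_square)
  have "sqrt 2 * (1 + 2 * pi * real (j div 2)) \<le> sqrt 2 * (1 + pi * real j)"
    using k by (intro mult_left_mono) (auto simp: mult.assoc[symmetric] intro!: mult_left_mono[of _ _ pi, simplified mult.commute] )
  also have "\<dots> \<le> 2 * pi * real j"
  proof -
    have j1: "real j \<ge> 1" using assms by simp
    have p3: "pi > 3" using pi_gt3 .
    have "pi * real j \<ge> 3" using mult_mono[of 3 pi 1 "real j"] j1 p3 by simp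
    moreover have "sqrt 2 * (1 + pi * real j) \<le> (283/200) * (1 + pi * real j)"
      using s2 \<open>pi * real j \<ge> 3\<close> by (intro mult_right_mono) auto
    moreover have "(283/200) * (1 + pi * real j) \<le> 2 * (pi * real j)"
      using \<open>pi * real j \<ge> 3\<close> by (subst distrib_left) linarith
    ultimately show ?thesis by (simp only: mult.assoc)
  qed
  finally show ?thesis .
qed

theorem lemmaA3:
  fixes n j :: nat and r :: real
  assumes "n \<ge> 2" and "1 \<le> j" and "j \<le> n" and "r > 0"
  shows "\<forall>S \<in> W1 r. \<bar>theta_n S j n - theta S j\<bar> \<le> 2 * pi * sqrt r * real j / real n"
proof
  fix S assume SW: "S \<in> W1 r"
  define S' where "S' = deriv S"
  have dS: "\<And>x. (S has_real_derivative S' x) (at x)"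
    using SW unfolding W1_def S'_def by (auto simp: DERIV_deriv_iff_real_differentiable)
  have cS': "continuous_on UNIV S'" using SW unfolding W1_def S'_def by auto
  have cS: "continuous_on UNIV S"
    by (metis DERIV_isCont continuous_at_imp_continuous_on dS)
  have cphi: "continuous_on UNIV (phi j)"
    by (metis DERIV_isCont continuous_at_imp_continuous_on phi_deriv)
  have Wb: "integral {0..1} (\<lambda>t. (S t)\<^sup>2) + integral {0..1} (\<lambda>t. (S' t)\<^sup>2) \<le> r"
    using SW unfolding W1_def S'_def by auto
  define A where "A = integral {0..1} (\<lambda>t. (S t)\<^sup>2)"
  define B where "B = integral {0..1} (\<lambda>t. (S' t)\<^sup>2)"
  have A0: "A \<ge> 0" unfolding A_def
    by (rule integral_nonneg) (auto intro!: integrable_continuous_interval continuous_on_subset[OF continuous_on_power[OF cS]])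
  have B0: "B \<ge> 0" unfolding B_def
    by (rule integral_nonneg) (auto intro!: integrable_continuous_interval continuous_on_subset[OF continuous_on_power[OF cS']])
  have sA: "sqrt A \<le> sqrt r" using A0 B0 Wb A_def B_def by simp
  have sB: "sqrt B \<le> sqrt r" using A0 B0 Wb A_def B_def by simp
  define w where "w = 2 * pi * real (j div 2)"
  have w0: "w \<ge> 0" unfolding w_def by simp
  define g where "g = (\<lambda>x. S x * phi j x)"
  define g' where "g' = (\<lambda>x. S' x * phi j x + S x * phi' j x)"
  have dg: "\<And>x. (g has_real_derivative g' x) (at x)"
    unfolding g_def g'_def by (auto intro!: derivative_eq_intros dS phi_deriv)
  have cg': "continuous_on UNIV g'"
    unfolding g'_def by (intro continuous_intros cS cS' cphi phi'_cont)
  have n0: "n > 0" using assms by simp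
  have e: "\<bar>theta_n S j n - theta S j\<bar> \<le> (1 / real n) * integral {0..1} (\<lambda>t. \<bar>g' t\<bar>)"
    using riemann_err[OF dg cg' n0] unfolding theta_n_def theta_def g_def by simp
  have ia: "(\<lambda>t. \<bar>h t\<bar>) integrable_on {0..1::real}" if "continuous_on UNIV h" for h :: "real \<Rightarrow> real"
    by (intro integrable_continuous_interval continuous_on_subset[OF continuous_on_rabs[OF that]]) auto
  have i1: "(\<lambda>t. sqrt 2 * \<bar>S' t\<bar>) integrable_on {0..1}"
    using integrable_on_cmult_left[OF ia[OF cS'], of "sqrt 2"] by simp
  have i2: "(\<lambda>t. (sqrt 2 * w) * \<bar>S t\<bar>) integrable_on {0..1}"
    using integrable_on_cmult_left[OF ia[OF cS], of "sqrt 2 * w"] by simp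
  have "integral {0..1} (\<lambda>t. \<bar>g' t\<bar>) \<le> integral {0..1} (\<lambda>t. sqrt 2 * \<bar>S' t\<bar> + (sqrt 2 * w) * \<bar>S t\<bar>)"
  proof (rule integral_le[OF ia[OF cg'] integrable_add[OF i1 i2]])
    fix x
    have "\<bar>g' x\<bar> \<le> \<bar>S' x\<bar> * \<bar>phi j x\<bar> + \<bar>S x\<bar> * \<bar>phi' j x\<bar>"
      unfolding g'_def by (metis abs_mult abs_triangle_ineq)
    also have "\<dots> \<le> \<bar>S' x\<bar> * sqrt 2 + \<bar>S x\<bar> * (sqrt 2 * w)"
      unfolding w_def by (intro add_mono mult_left_mono phi_bound phi'_bound) auto
    finally show "\<bar>g' x\<bar> \<le> sqrt 2 * \<bar>S' x\<bar> + (sqrt 2 * w) * \<bar>S x\<bar>" by (simp add: mult.commute)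
  qed
  also have "\<dots> = sqrt 2 * integral {0..1} (\<lambda>t. \<bar>S' t\<bar>) + (sqrt 2 * w) * integral {0..1} (\<lambda>t. \<bar>S t\<bar>)"
    using integral_add[OF i1 i2] by simp
  also have "\<dots> \<le> sqrt 2 * sqrt B + (sqrt 2 * w) * sqrt A"
    unfolding A_def B_def using w0
    by (intro add_mono mult_left_mono cauchy_l1 cS cS') auto
  also have "\<dots> \<le> sqrt 2 * sqrt r + (sqrt 2 * w) * sqrt r"
    using w0 sA sB by (intro add_mono mult_left_mono) auto
  also have "\<dots> = sqrt 2 * (1 + w) * sqrt r" by (simp add: algebra_simps)
  also have "\<dots> \<le> 2 * pi * real j * sqrt r"
    using final_arith[OF assms(2)] assms(4) unfolding w_def by (intro mult_right_mono) auto
  finally have "(1 / real n) * integral {0..1} (\<lambda>t. \<bar>g' t\<bar>) \<le> (1 / real n) * (2 * pi * real j * sqrt r)"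
    by (intro mult_left_mono) auto
  moreover have "(1 / real n) * (2 * pi * real j * sqrt r) = 2 * pi * sqrt r * real j / real n"
    by (simp add: mult.commute mult.left_commute)
  ultimately show "\<bar>theta_n S j n - theta S j\<bar> \<le> 2 * pi * sqrt r * real j / real n"
    using e by linarith
qed

end
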